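(* Let $A,C$ be groups, $i_P,i_N:C\to A$ injective homomorphisms, $H=\langle A,t\mid i_N(c)=t\,i_P(c)\,t^{-1}\ \forall c\in C\rangle$, and $p:H\to\mathbb Z$ the epimorphism with $p(t)=1$, $p(A)=0$. For $k\ge0$ let $A_k\le H$ be the subgroup generated by all $t^{-i}at^{i}$ with $a\in A$, $0\le i\le k$, and let $A_{-1}=i_N(C)$. Let $w\in H$ with $p(w)=1$. Then either $w$ is conjugate to $at$ for some $a\in A$, or there is some $k\in\mathbb Z_{>0}$ and $m\ge1$ such that a conjugate of $w$ can be written as $a_1t^{-1}b_1t\cdots a_mt^{-1}b_mt\,x\,t$ with $a_i\in A_{k-1}\setminus t^{-1}A_{k-2}t$, $b_i\in A_{k-1}\setminus A_{k-2}$, and $x\in A_{k-1}$. *)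

theory Defs
  imports "HOL-Algebra.Algebra"
begin

text \<open>Concrete construction of the HNN extension
  H = < A, t | iN(c) = t iP(c) t^-1 (c in C) >
  as the quotient of the monoid of words over the alphabet
  (carrier A) + {t, t^-1} by the congruence generated by the relations of A,
  the free-group relations for t, and the HNN relations.
  Letters: Inl a is the generator a of A, Inr True is t, Inr False is t^-1.\<close>

type_synonym 'a hnn_word = "('a + bool) list"

definition hnn_words :: "('a, 'm) monoid_scheme \<Rightarrow> 'a hnn_word set" where
  "hnn_words A = {w. \<forall>a. Inl a \<in> set w \<longrightarrow> a \<in> carrier A}"

inductive hnn_basic ::
  "('a, 'm) monoid_scheme \<Rightarrow> ('c, 'n) monoid_scheme \<Rightarrow> ('c \<Rightarrow> 'a) \<Rightarrow> ('c \<Rightarrow> 'a)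
   \<Rightarrow> 'a hnn_word \<Rightarrow> 'a hnn_word \<Rightarrow> bool"
  for A C iP iN where
  mult_rel: "a \<in> carrier A \<Longrightarrow> b \<in> carrier A \<Longrightarrow>
     hnn_basic A C iP iN [Inl a, Inl b] [Inl (a \<otimes>\<^bsub>A\<^esub> b)]"
| one_rel: "hnn_basic A C iP iN [Inl \<one>\<^bsub>A\<^esub>] []"
| t_inv1: "hnn_basic A C iP iN [Inr True, Inr False] []"
| t_inv2: "hnn_basic A C iP iN [Inr False, Inr True] []"
| hnn_rel: "c \<in> carrier C \<Longrightarrow>
     hnn_basic A C iP iN [Inl (iN c)] [Inr True, Inl (iP c), Inr False]"

definition hnn_eq ::
  "('a, 'm) monoid_scheme \<Rightarrow> ('c, 'n) monoid_scheme \<Rightarrow> ('c \<Rightarrow> 'a) \<Rightarrow> ('c \<Rightarrow> 'a)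
   \<Rightarrow> 'a hnn_word \<Rightarrow> 'a hnn_word \<Rightarrow> bool" where
  "hnn_eq A C iP iN = equivclp
     (\<lambda>x y. \<exists>u v l r. hnn_basic A C iP iN l r \<and> x = u @ l @ v \<and> y = u @ r @ v)"

definition hnn_class ::
  "('a, 'm) monoid_scheme \<Rightarrow> ('c, 'n) monoid_scheme \<Rightarrow> ('c \<Rightarrow> 'a) \<Rightarrow> ('c \<Rightarrow> 'a)
   \<Rightarrow> 'a hnn_word \<Rightarrow> 'a hnn_word set" where
  "hnn_class A C iP iN w = {w' \<in> hnn_words A. hnn_eq A C iP iN w w'}"

definition HNN ::
  "('a, 'm) monoid_scheme \<Rightarrow> ('c, 'n) monoid_scheme \<Rightarrow> ('c \<Rightarrow> 'a) \<Rightarrow> ('c \<Rightarrow> 'a)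
   \<Rightarrow> 'a hnn_word set monoid" where
  "HNN A C iP iN =
     \<lparr> carrier = hnn_class A C iP iN ` hnn_words A,
       monoid.mult = (\<lambda>U V. hnn_class A C iP iN ((SOME x. x \<in> U) @ (SOME y. y \<in> V))),
       one = hnn_class A C iP iN [] \<rparr>"

definition hnn_incl ::
  "('a, 'm) monoid_scheme \<Rightarrow> ('c, 'n) monoid_scheme \<Rightarrow> ('c \<Rightarrow> 'a) \<Rightarrow> ('c \<Rightarrow> 'a)
   \<Rightarrow> 'a \<Rightarrow> 'a hnn_word set" where
  "hnn_incl A C iP iN a = hnn_class A C iP iN [Inl a]"

definition hnn_t ::
  "('a, 'm) monoid_scheme \<Rightarrow> ('c, 'n) monoid_scheme \<Rightarrow> ('c \<Rightarrow> 'a) \<Rightarrow> ('c \<Rightarrow> 'a)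
   \<Rightarrow> 'a hnn_word set" where
  "hnn_t A C iP iN = hnn_class A C iP iN [Inr True]"

fun letter_exp :: "'a + bool \<Rightarrow> int" where
  "letter_exp (Inl a) = 0"
| "letter_exp (Inr b) = (if b then 1 else -1)"

definition hnn_p :: "'a hnn_word set \<Rightarrow> int" where
  "hnn_p U = sum_list (map letter_exp (SOME x. x \<in> U))"

text \<open>The subgroups A_k: for k >= 0 generated by t^-i a t^i, a in A, 0 <= i <= k;
  A_{-1} = iN(C). (Values for k < -1 are irrelevant.)\<close>
definition hnn_Ak ::
  "('a, 'm) monoid_scheme \<Rightarrow> ('c, 'n) monoid_scheme \<Rightarrow> ('c \<Rightarrow> 'a) \<Rightarrow> ('c \<Rightarrow> 'a)
   \<Rightarrow> int \<Rightarrow> 'a hnn_word set set" where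
  "hnn_Ak A C iP iN k =
     (if k = -1 then hnn_incl A C iP iN ` iN ` carrier C
      else if k \<ge> 0 then
        generate (HNN A C iP iN)
          {inv\<^bsub>HNN A C iP iN\<^esub> (hnn_t A C iP iN [^]\<^bsub>HNN A C iP iN\<^esub> i)
             \<otimes>\<^bsub>HNN A C iP iN\<^esub> hnn_incl A C iP iN a
             \<otimes>\<^bsub>HNN A C iP iN\<^esub> (hnn_t A C iP iN [^]\<^bsub>HNN A C iP iN\<^esub> i)
           | a i. a \<in> carrier A \<and> i \<le> nat k}
      else {})"

fun alt_prod :: "('g, 'b) monoid_scheme \<Rightarrow> 'g \<Rightarrow> (nat \<Rightarrow> 'g) \<Rightarrow> (nat \<Rightarrow> 'g) \<Rightarrow> nat \<Rightarrow> 'g" where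
  "alt_prod G t a b 0 = \<one>\<^bsub>G\<^esub>"
| "alt_prod G t a b (Suc n) =
     alt_prod G t a b n \<otimes>\<^bsub>G\<^esub> (a (Suc n) \<otimes>\<^bsub>G\<^esub> inv\<^bsub>G\<^esub> t \<otimes>\<^bsub>G\<^esub> b (Suc n) \<otimes>\<^bsub>G\<^esub> t)"

end

theory Submission
  imports Defs
begin


lemma equivclp_map:
  assumes "\<And>x y. r x y \<Longrightarrow> r (f x) (f y)" and "equivclp r a b"
  shows "equivclp r (f a) (f b)"
  using assms(2)
proof (induction rule: equivclp_induct)
  case base then show ?case by simp
next
  case (step y z) then show ?case using assms(1) equivclp_into_equivclp by metis
qed

locale hnn = A: group A + C: group C for A (structure) and C (structure) and iP iN +
  assumes iP: "iP \<in> hom C A" and iN: "iN \<in> hom C A"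
begin

abbreviation "H \<equiv> HNN A C iP iN"
abbreviation "cls \<equiv> hnn_class A C iP iN"
abbreviation "eqw \<equiv> hnn_eq A C iP iN"
abbreviation "W \<equiv> hnn_words A"
abbreviation "tt \<equiv> hnn_t A C iP iN"
abbreviation "incl \<equiv> hnn_incl A C iP iN"

lemma eqw_ctx: "eqw x y \<Longrightarrow> eqw (u@x@v) (u@y@v)"
  unfolding hnn_eq_def
  apply (rule equivclp_map[where f="\<lambda>x. u@x@v"])
   apply (elim exE conjE)
  subgoal for x y u' v' l r by (rule exI[of _ "u@u'"], rule exI[of _ "v'@v"], auto)
  by assumption

lemma eqw_basic: "hnn_basic A C iP iN l r \<Longrightarrow> eqw (u@l@v) (u@r@v)"
  unfolding hnn_eq_def by (rule r_into_equivclp) blast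

lemma eqw_basic0: "hnn_basic A C iP iN l r \<Longrightarrow> eqw l r"
  using eqw_basic[of l r "[]" "[]"] by simp

lemma eqw_refl[simp]: "eqw x x" unfolding hnn_eq_def by simp
lemma eqw_sym: "eqw x y \<Longrightarrow> eqw y x" unfolding hnn_eq_def by (rule equivclp_sym)
lemma eqw_trans: "eqw x y \<Longrightarrow> eqw y z \<Longrightarrow> eqw x z" unfolding hnn_eq_def by (rule equivclp_trans)

lemma cls_eq: "eqw x y \<Longrightarrow> cls x = cls y"
  unfolding hnn_class_def using eqw_sym eqw_trans by blast

lemma mem_cls: "x \<in> W \<Longrightarrow> x \<in> cls x"
  unfolding hnn_class_def by simp

lemma W_append[simp]: "x @ y \<in> W \<longleftrightarrow> x \<in> W \<and> y \<in> W"
  unfolding hnn_words_def by auto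

lemma W_Cons[simp]: "l # y \<in> W \<longleftrightarrow> (\<forall>a. l = Inl a \<longrightarrow> a \<in> carrier A) \<and> y \<in> W"
  unfolding hnn_words_def by auto

lemma W_Nil[simp]: "[] \<in> W" unfolding hnn_words_def by auto

lemma W_Inr[simp]: "[Inr b] \<in> W" unfolding hnn_words_def by auto
lemma W_Inl[simp]: "[Inl a] \<in> W \<longleftrightarrow> a \<in> carrier A" unfolding hnn_words_def by auto

lemma some_cls: assumes "x \<in> W" shows "(SOME x'. x' \<in> cls x) \<in> W \<and> eqw x (SOME x'. x' \<in> cls x)"
proof -
  have "(SOME x'. x' \<in> cls x) \<in> cls x" using mem_cls[OF assms] by (rule someI)
  then show ?thesis unfolding hnn_class_def by auto
qed

lemma mult_cls: assumes "x \<in> W" "y \<in> W" shows "cls x \<otimes>\<^bsub>H\<^esub> cls y = cls (x @ y)"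
proof -
  let ?x = "SOME x'. x' \<in> cls x" and ?y = "SOME x'. x' \<in> cls y"
  have 1: "eqw x ?x" "eqw y ?y" using some_cls assms by auto
  have "eqw (x @ y) (?x @ y)" using eqw_ctx[OF 1(1), of "[]" y] by simp
  moreover have "eqw (?x @ y) (?x @ ?y)" using eqw_ctx[OF 1(2), of ?x "[]"] by simp
  ultimately have "eqw (x@y) (?x @ ?y)" by (rule eqw_trans)
  then show ?thesis unfolding HNN_def using cls_eq by simp
qed

lemma carrier_H: "carrier H = cls ` W" unfolding HNN_def by simp
lemma one_H: "\<one>\<^bsub>H\<^esub> = cls []" unfolding HNN_def by simp

definition invl :: "'a + bool \<Rightarrow> 'a + bool" where
  "invl l = (case l of Inl a \<Rightarrow> Inl (inv\<^bsub>A\<^esub> a) | Inr b \<Rightarrow> Inr (\<not> b))"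

definition "iw x = rev (map invl x)"

lemma iw_W: "x \<in> W \<Longrightarrow> iw x \<in> W"
  unfolding hnn_words_def iw_def invl_def by (auto split: sum.splits)

lemma iw_inv: "x \<in> W \<Longrightarrow> eqw (iw x @ x) []"
proof (induction x)
  case Nil then show ?case by (simp add: iw_def)
next
  case (Cons l x)
  have l: "[l] \<in> W" and x: "x \<in> W" using Cons.prems by (auto simp: hnn_words_def)
  have "eqw [invl l, l] []"
  proof (cases l)
    case (Inl a)
    then have a: "a \<in> carrier A" using l by simp
    have "hnn_basic A C iP iN [Inl (inv\<^bsub>A\<^esub> a), Inl a] [Inl (inv\<^bsub>A\<^esub> a \<otimes>\<^bsub>A\<^esub> a)]"
      using a by (intro hnn_basic.mult_rel) auto
    then have "eqw [invl l, l] [Inl \<one>\<^bsub>A\<^esub>]"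
      using Inl a eqw_basic0 by (simp add: invl_def)
    then show ?thesis using eqw_basic0[OF hnn_basic.one_rel] eqw_trans by blast
  next
    case (Inr b)
    then show ?thesis by (cases b) (auto simp: invl_def intro!: eqw_basic0 hnn_basic.intros)
  qed
  then have "eqw (iw x @ [invl l, l] @ x) (iw x @ [] @ x)" by (rule eqw_ctx)
  then have "eqw (iw (l # x) @ l # x) (iw x @ x)" by (simp add: iw_def)
  then show ?case using Cons.IH[OF x] eqw_trans by blast
qed

lemma group_H: "group H"
proof (rule groupI)
  fix U V assume "U \<in> carrier H" "V \<in> carrier H"
  then obtain x y where "x \<in> W" "y \<in> W" "U = cls x" "V = cls y" by (auto simp: carrier_H)
  then show "U \<otimes>\<^bsub>H\<^esub> V \<in> carrier H" by (simp add: mult_cls carrier_H)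
next
  show "\<one>\<^bsub>H\<^esub> \<in> carrier H" by (simp add: carrier_H one_H)
next
  fix U V Z assume "U \<in> carrier H" "V \<in> carrier H" "Z \<in> carrier H"
  then obtain x y z where "x \<in> W" "y \<in> W" "z \<in> W" "U = cls x" "V = cls y" "Z = cls z" by (auto simp: carrier_H)
  then show "U \<otimes>\<^bsub>H\<^esub> V \<otimes>\<^bsub>H\<^esub> Z = U \<otimes>\<^bsub>H\<^esub> (V \<otimes>\<^bsub>H\<^esub> Z)" by (simp add: mult_cls)
next
  fix U assume "U \<in> carrier H"
  then obtain x where "x \<in> W" "U = cls x" by (auto simp: carrier_H)
  then show "\<one>\<^bsub>H\<^esub> \<otimes>\<^bsub>H\<^esub> U = U" by (simp add: mult_cls one_H)
next
  fix U assume "U \<in> carrier H"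
  then obtain x where x: "x \<in> W" "U = cls x" by (auto simp: carrier_H)
  show "\<exists>V\<in>carrier H. V \<otimes>\<^bsub>H\<^esub> U = \<one>\<^bsub>H\<^esub>"
    apply (rule bexI[of _ "cls (iw x)"])
    using x iw_W[OF x(1)] iw_inv[OF x(1)] cls_eq by (auto simp: mult_cls one_H carrier_H)
qed

end


definition pc :: "('g, 'b) monoid_scheme \<Rightarrow> 'g \<Rightarrow> 'g \<times> 'g \<Rightarrow> 'g" where
  "pc G t p = fst p \<otimes>\<^bsub>G\<^esub> inv\<^bsub>G\<^esub> t \<otimes>\<^bsub>G\<^esub> snd p \<otimes>\<^bsub>G\<^esub> t"

fun prodl :: "('g, 'b) monoid_scheme \<Rightarrow> 'g \<Rightarrow> ('g \<times> 'g) list \<Rightarrow> 'g" where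
  "prodl G t [] = \<one>\<^bsub>G\<^esub>"
| "prodl G t (p # ps) = pc G t p \<otimes>\<^bsub>G\<^esub> prodl G t ps"

context group begin

lemma lc1[simp]: "x \<in> carrier G \<Longrightarrow> y \<in> carrier G \<Longrightarrow> inv x \<otimes> (x \<otimes> y) = y"
  by (simp add: m_assoc[symmetric])
lemma lc2[simp]: "x \<in> carrier G \<Longrightarrow> y \<in> carrier G \<Longrightarrow> x \<otimes> (inv x \<otimes> y) = y"
  by (simp add: m_assoc[symmetric])

lemma pc_carrier[simp]: "t \<in> carrier G \<Longrightarrow> fst p \<in> carrier G \<Longrightarrow> snd p \<in> carrier G \<Longrightarrow> pc G t p \<in> carrier G"
  by (simp add: pc_def)

definition "okl S ps \<longleftrightarrow> (\<forall>p\<in>set ps. fst p \<in> S \<and> snd p \<in> S)"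

lemma okl_simps[simp]: "okl S [] " "okl S (p # ps) \<longleftrightarrow> fst p \<in> S \<and> snd p \<in> S \<and> okl S ps"
  "okl S (ps @ qs) \<longleftrightarrow> okl S ps \<and> okl S qs"
  by (auto simp: okl_def)

lemma prodl_carrier[simp]: "t \<in> carrier G \<Longrightarrow> okl (carrier G) ps \<Longrightarrow> prodl G t ps \<in> carrier G"
  by (induction ps) auto

lemma prodl_append: "t \<in> carrier G \<Longrightarrow> okl (carrier G) ps \<Longrightarrow> okl (carrier G) qs \<Longrightarrow>
   prodl G t (ps @ qs) = prodl G t ps \<otimes> prodl G t qs"
proof (induction ps)
  case Nil then show ?case by simp
next
  case (Cons p ps)
  then show ?case by (simp add: m_assoc)
qed

lemma okl_mono: "okl S ps \<Longrightarrow> S \<subseteq> T \<Longrightarrow> okl T ps"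
  by (auto simp: okl_def)

lemma alt_prod_eq:
  assumes "t \<in> carrier G" "okl (carrier G) ps" "n \<le> length ps"
  shows "alt_prod G t (\<lambda>i. fst (ps ! (i - 1))) (\<lambda>i. snd (ps ! (i - 1))) n = prodl G t (take n ps)"
  using assms(3)
proof (induction n)
  case 0 then show ?case by simp
next
  case (Suc n)
  have n: "n < length ps" using Suc by simp
  then have p: "ps ! n \<in> set ps" by simp
  have ok1: "okl (carrier G) (take n ps)" using assms(2) okl_simps(3) by (metis append_take_drop_id)
  have ok2: "okl (carrier G) [ps ! n]" using assms(2) p by (auto simp: okl_def)
  have "prodl G t (take (Suc n) ps) = prodl G t (take n ps @ [ps ! n])"
    using n by (simp add: take_Suc_conv_app_nth)
  also have "\<dots> = prodl G t (take n ps) \<otimes> (pc G t (ps ! n) \<otimes> \<one>)"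
    using prodl_append[OF assms(1) ok1 ok2] by simp
  also have "\<dots> = prodl G t (take n ps) \<otimes> pc G t (ps ! n)"
    using ok2 assms(1) by simp
  finally show ?case using Suc by (simp add: pc_def)
qed

end

locale absHNN = group G for G (structure) +
  fixes t w :: 'a and Ak :: "int \<Rightarrow> 'a set"
  assumes t: "t \<in> carrier G" and w: "w \<in> carrier G"
  and sub: "\<And>k. k \<ge> 0 \<Longrightarrow> subgroup (Ak k) G"
  and conjsub: "\<And>k. k \<ge> 1 \<Longrightarrow> {inv t \<otimes> y \<otimes> t | y. y \<in> Ak (k-2)} \<subseteq> Ak (k-1)"
  and monosub: "\<And>k. k \<ge> 1 \<Longrightarrow> Ak (k-2) \<subseteq> Ak (k-1)"
  and decomp: "\<And>k x. k \<ge> 1 \<Longrightarrow> x \<in> Ak k \<Longrightarrow> \<exists>zs. set zs \<subseteq> Ak (k-1) \<union> {inv t \<otimes> y \<otimes> t | y. y \<in> Ak (k-1)}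
       \<and> x = foldr (\<otimes>) zs \<one>"
begin

definition concl where "concl \<longleftrightarrow> (\<exists>x \<in> Ak 0. \<exists>g \<in> carrier G. g \<otimes> w \<otimes> inv g = x \<otimes> t) \<or>
  (\<exists>k::int. k > 0 \<and> (\<exists>m::nat. m \<ge> 1 \<and> (\<exists>a b x g.
            (\<forall>i\<in>{1..m}.
               a i \<in> Ak (k - 1) - {inv t \<otimes> y \<otimes> t | y. y \<in> Ak (k - 2)}
             \<and> b i \<in> Ak (k - 1) - Ak (k - 2))
            \<and> x \<in> Ak (k - 1)
            \<and> g \<in> carrier G
            \<and> g \<otimes> w \<otimes> inv g = alt_prod G t a b m \<otimes> x \<otimes> t)))"

lemma conv:
  assumes U: "subgroup U G" and zs: "set zs \<subseteq> U \<union> {inv t \<otimes> y \<otimes> t | y. y \<in> U}"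
  shows "\<exists>ps x'. okl U ps \<and> x' \<in> U \<and> foldr (\<otimes>) zs \<one> = prodl G t ps \<otimes> x'"
  using zs
proof (induction zs)
  case Nil
  then show ?case using U by (auto intro!: exI[of _ "[]"] exI[of _ \<one>] subgroup.one_closed)
next
  case (Cons z zs)
  then obtain ps x' where ps: "okl U ps" "x' \<in> U" "foldr (\<otimes>) zs \<one> = prodl G t ps \<otimes> x'" by auto
  have UC: "U \<subseteq> carrier G" using U subgroup.subset by blast
  have okc: "okl (carrier G) ps" using okl_mono[OF ps(1) UC] .
  have xc: "x' \<in> carrier G" using ps(2) UC by auto
  show ?case
  proof (cases "z \<in> U")
    case True
    then have zc: "z \<in> carrier G" using UC by auto
    show ?thesis
    proof (cases ps)
      case Nil
      then show ?thesis using ps True zc xc U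
        by (auto intro!: exI[of _ "[]"] exI[of _ "z \<otimes> x'"] subgroup.m_closed)
    next
      case (Cons p ps')
      have pc: "fst p \<in> carrier G" "snd p \<in> carrier G" "okl (carrier G) ps'" using okc Cons by auto
      show ?thesis
        apply (rule exI[of _ "(z \<otimes> fst p, snd p) # ps'"], rule exI[of _ x'])
        using ps Cons True U pc zc xc t by (auto simp: pc_def m_assoc intro: subgroup.m_closed)
    qed
  next
    case False
    then obtain b where b: "b \<in> U" "z = inv t \<otimes> b \<otimes> t" using Cons.prems by auto
    have bc: "b \<in> carrier G" using b UC by auto
    show ?thesis
      apply (rule exI[of _ "(\<one>, b) # ps"], rule exI[of _ x'])
      using ps b bc U okc xc t by (auto simp: pc_def m_assoc intro: subgroup.one_closed)
  qed
qed

lemma Ak_carrier: "k \<ge> 0 \<Longrightarrow> x \<in> Ak k \<Longrightarrow> x \<in> carrier G"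
  using sub subgroup.subset by blast

lemma inner:
  assumes k: "k \<ge> 1"
  and IH: "\<And>x g. x \<in> Ak (k-1) \<Longrightarrow> g \<in> carrier G \<Longrightarrow> g \<otimes> w \<otimes> inv g = x \<otimes> t \<Longrightarrow> concl"
  shows "length ps = N \<Longrightarrow> okl (Ak (k-1)) ps \<Longrightarrow> x' \<in> Ak (k-1) \<Longrightarrow> g \<in> carrier G \<Longrightarrow>
    g \<otimes> w \<otimes> inv g = prodl G t ps \<otimes> x' \<otimes> t \<Longrightarrow> concl"
proof (induction N arbitrary: ps x' g rule: less_induct)
  case (less N ps x' g)
  define U where "U = Ak (k-1)"
  define D where "D = Ak (k-2)"
  have Usub: "subgroup U G" using sub k unfolding U_def by simp
  have UC: "U \<subseteq> carrier G" using Usub subgroup.subset by blast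
  have DU: "D \<subseteq> U" using monosub k unfolding U_def D_def by simp
  have cjD: "inv t \<otimes> d \<otimes> t \<in> U" if "d \<in> D" for d using conjsub[OF k] that unfolding U_def D_def by blast
  have okU: "okl U ps" and x'U: "x' \<in> U" using less.prems unfolding U_def by auto
  have okc: "okl (carrier G) ps" using okl_mono[OF okU UC] .
  have xc: "x' \<in> carrier G" using x'U UC by auto
  have gc: "g \<in> carrier G" and eq: "g \<otimes> w \<otimes> inv g = prodl G t ps \<otimes> x' \<otimes> t" using less.prems by auto
  note Umc = subgroup.m_closed[OF Usub]
  have tc: "t \<in> carrier G" by (rule t)
  show ?case
  proof (cases "ps = []")
    case True
    then show ?thesis using IH[of x' g] less.prems xc by simp
  next
    case nonempty: False
    show ?thesis
    proof (cases "\<exists>p\<in>set ps. snd p \<in> D")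
      case True
      then obtain p where p: "p \<in> set ps" "snd p \<in> D" by blast
      then obtain ps1 ps2 where sp: "ps = ps1 @ p # ps2" by (meson split_list)
      have ok1: "okl U ps1" "okl U ps2" "fst p \<in> U" "snd p \<in> U" using okU sp by auto
      have ok1c: "okl (carrier G) ps1" "okl (carrier G) ps2" "fst p \<in> carrier G" "snd p \<in> carrier G"
        using ok1 okl_mono[OF _ UC] UC by auto
      define c where "c = pc G t p"
      have c_eq: "c = fst p \<otimes> (inv t \<otimes> snd p \<otimes> t)" unfolding c_def pc_def using ok1c tc by (simp add: m_assoc)
      have cU: "c \<in> U" unfolding c_eq using Umc ok1 cjD p by blast
      have cc: "c \<in> carrier G" using cU UC by auto
      show ?thesis
      proof (cases ps2)
        case Nil
        have "prodl G t ps \<otimes> x' \<otimes> t = prodl G t ps1 \<otimes> (c \<otimes> x') \<otimes> t"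
          using prodl_append[OF tc ok1c(1), of "[p]"] ok1c sp Nil cc xc tc
          by (simp add: c_def m_assoc)
        then show ?thesis
          using less.IH[of "length ps1" ps1 "c \<otimes> x'" g] sp Nil ok1 Umc cU x'U gc eq less.prems(1)
          unfolding U_def by simp
      next
        case (Cons q ps3)
        have qc: "fst q \<in> carrier G" "snd q \<in> carrier G" "okl (carrier G) ps3" using ok1c Cons by auto
        have qU: "fst q \<in> U" "snd q \<in> U" "okl U ps3" using ok1 Cons by auto
        have "prodl G t ps \<otimes> x' \<otimes> t = prodl G t (ps1 @ (c \<otimes> fst q, snd q) # ps3) \<otimes> x' \<otimes> t"
          using prodl_append[OF tc ok1c(1), of "p # q # ps3"] prodl_append[OF tc ok1c(1), of "(c \<otimes> fst q, snd q) # ps3"]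
            ok1c sp Cons cc xc tc qc
          by (simp add: c_def pc_def m_assoc)
        then show ?thesis
          using less.IH[of "length (ps1 @ (c \<otimes> fst q, snd q) # ps3)" "ps1 @ (c \<otimes> fst q, snd q) # ps3" x' g]
            sp Cons ok1 qU Umc cU x'U gc eq less.prems(1)
          unfolding U_def by simp
      qed
    next
      case noD: False
      show ?thesis
      proof (cases "\<exists>ps1 p1 p2 ps3. ps = ps1 @ p1 # p2 # ps3 \<and> fst p2 \<in> {inv t \<otimes> y \<otimes> t | y. y \<in> D}")
        case True
        then obtain ps1 p1 p2 ps3 d where sp: "ps = ps1 @ p1 # p2 # ps3" and d: "d \<in> D" "fst p2 = inv t \<otimes> d \<otimes> t" by blast
        have ok1: "okl U ps1" "okl U ps3" "fst p1 \<in> U" "snd p1 \<in> U" "fst p2 \<in> U" "snd p2 \<in> U"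
          using okU sp by auto
        have dU: "d \<in> U" using d DU by auto
        have ok1c: "okl (carrier G) ps1" "okl (carrier G) ps3" "fst p1 \<in> carrier G" "snd p1 \<in> carrier G"
           "fst p2 \<in> carrier G" "snd p2 \<in> carrier G" "d \<in> carrier G"
          using ok1 okl_mono[OF _ UC] UC dU by auto
        define q where "q = (fst p1, snd p1 \<otimes> d \<otimes> snd p2)"
        have qU: "fst q \<in> U" "snd q \<in> U" unfolding q_def using ok1 dU Umc by auto
        have "prodl G t ps \<otimes> x' \<otimes> t = prodl G t (ps1 @ q # ps3) \<otimes> x' \<otimes> t"
          using prodl_append[OF tc ok1c(1), of "p1 # p2 # ps3"] prodl_append[OF tc ok1c(1), of "q # ps3"]
            ok1c sp xc tc d(2)
          by (simp add: q_def pc_def m_assoc)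
        then show ?thesis
          using less.IH[of "length (ps1 @ q # ps3)" "ps1 @ q # ps3" x' g]
            sp ok1 qU x'U gc eq less.prems(1)
          unfolding U_def by simp
      next
        case noB: False
        show ?thesis
        proof (cases "fst (hd ps) \<in> {inv t \<otimes> y \<otimes> t | y. y \<in> D}")
          case True
          obtain p1 ps2 where sp: "ps = p1 # ps2" using nonempty by (cases ps) auto
          obtain d where d: "d \<in> D" "fst p1 = inv t \<otimes> d \<otimes> t" using True sp by auto
          have ok1: "okl U ps2" "fst p1 \<in> U" "snd p1 \<in> U" using okU sp by auto
          have dU: "d \<in> U" using d DU by auto
          have ok1c: "okl (carrier G) ps2" "fst p1 \<in> carrier G" "snd p1 \<in> carrier G" "d \<in> carrier G"
            using ok1 okl_mono[OF _ UC] UC dU by auto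
          define e where "e = d \<otimes> snd p1"
          have eU: "e \<in> U" unfolding e_def using dU ok1 Umc by auto
          have ec: "e \<in> carrier G" using eU UC by auto
          define h where "h = inv t \<otimes> e \<otimes> t"
          have hc: "h \<in> carrier G" unfolding h_def using ec tc by simp
          have ph: "pc G t p1 = h" unfolding h_def e_def pc_def using d ok1c tc by (simp add: m_assoc)
          define R where "R = prodl G t ps2"
          have Rc: "R \<in> carrier G" unfolding R_def using ok1c tc by simp
          define g' where "g' = inv h \<otimes> g"
          have g'c: "g' \<in> carrier G" unfolding g'_def using hc gc by simp
          have "g' \<otimes> w \<otimes> inv g' = inv h \<otimes> (g \<otimes> w \<otimes> inv g) \<otimes> h"
            unfolding g'_def using hc gc w by (simp add: inv_mult_group m_assoc)
          also have "\<dots> = inv h \<otimes> (h \<otimes> (R \<otimes> (x' \<otimes> (t \<otimes> h))))"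
            using eq sp ph hc Rc xc tc by (simp add: R_def m_assoc)
          also have "\<dots> = R \<otimes> (x' \<otimes> (t \<otimes> h))" using hc Rc xc tc by simp
          also have "\<dots> = R \<otimes> (x' \<otimes> e) \<otimes> t" unfolding h_def using Rc xc tc ec by (simp add: m_assoc)
          finally have eq2: "g' \<otimes> w \<otimes> inv g' = prodl G t ps2 \<otimes> (x' \<otimes> e) \<otimes> t" unfolding R_def .
          show ?thesis
            using less.IH[of "length ps2" ps2 "x' \<otimes> e" g'] sp ok1 eU x'U Umc g'c eq2 less.prems(1)
            unfolding U_def by simp
        next
          case noC: False
          define m where "m = length ps"
          have m1: "m \<ge> 1" using nonempty unfolding m_def by (cases ps) auto
          show ?thesis unfolding concl_def
          proof (rule disjI2, rule exI[of _ k], intro conjI, use k in simp, rule exI[of _ m], intro conjI, rule m1,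
              rule exI[of _ "\<lambda>i. fst (ps ! (i - 1))"], rule exI[of _ "\<lambda>i. snd (ps ! (i - 1))"],
              rule exI[of _ x'], rule exI[of _ g], intro conjI)
            show "\<forall>i\<in>{1..m}. fst (ps ! (i - 1)) \<in> Ak (k - 1) - {inv t \<otimes> y \<otimes> t |y. y \<in> Ak (k - 2)} \<and>
               snd (ps ! (i - 1)) \<in> Ak (k - 1) - Ak (k - 2)"
            proof
              fix i assume i: "i \<in> {1..m}"
              then have iin: "ps ! (i - 1) \<in> set ps" unfolding m_def by auto
              have A1: "fst (ps ! (i - 1)) \<in> U" "snd (ps ! (i - 1)) \<in> U" using okU iin unfolding okl_def by auto
              have A2: "snd (ps ! (i - 1)) \<notin> D" using noD iin by blast
              have A3: "fst (ps ! (i - 1)) \<notin> {inv t \<otimes> y \<otimes> t |y. y \<in> D}"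
              proof
                assume a: "fst (ps ! (i - 1)) \<in> {inv t \<otimes> y \<otimes> t |y. y \<in> D}"
                show False
                proof (cases "i = 1")
                  case True
                  then show False using a noC nonempty by (simp add: hd_conv_nth)
                next
                  case False
                  then have i2: "i \<ge> 2" "i \<le> length ps" using i unfolding m_def by auto
                  have "ps = take (i - 2) ps @ ps ! (i - 2) # ps ! (i - 1) # drop i ps"
                  proof -
                    have "ps = take (i - 2) ps @ drop (i - 2) ps" by simp
                    also have "drop (i - 2) ps = ps ! (i - 2) # drop (Suc (i - 2)) ps"
                      using i2 by (simp add: Cons_nth_drop_Suc)
                    also have "drop (Suc (i - 2)) ps = ps ! (i - 1) # drop i ps"
                      using i2 Cons_nth_drop_Suc[of "i - 1" ps] by (simp add: Suc_diff_Suc numeral_2_eq_2)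
                    finally show ?thesis .
                  qed
                  then show False using noB a by blast
                qed
              qed
              show "fst (ps ! (i - 1)) \<in> Ak (k - 1) - {inv t \<otimes> y \<otimes> t |y. y \<in> Ak (k - 2)} \<and>
                 snd (ps ! (i - 1)) \<in> Ak (k - 1) - Ak (k - 2)"
                using A1 A2 A3 unfolding U_def D_def by auto
            qed
          next
            show "x' \<in> Ak (k - 1)" using less.prems by simp
          next
            show "g \<in> carrier G" by (rule gc)
          next
            show "g \<otimes> w \<otimes> inv g = alt_prod G t (\<lambda>i. fst (ps ! (i - 1))) (\<lambda>i. snd (ps ! (i - 1))) m \<otimes> x' \<otimes> t"
              using eq alt_prod_eq[OF tc okc, of m] unfolding m_def by simp
          qed
        qed
      qed
    qed
  qed
qed

lemma outer: "x \<in> Ak (int n) \<Longrightarrow> g \<in> carrier G \<Longrightarrow> g \<otimes> w \<otimes> inv g = x \<otimes> t \<Longrightarrow> concl"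
proof (induction n arbitrary: x g)
  case 0
  then show ?case unfolding concl_def by auto
next
  case (Suc n)
  define k where "k = int (Suc n)"
  have k: "k \<ge> 1" unfolding k_def by simp
  have km: "k - 1 = int n" unfolding k_def by simp
  obtain zs where zs: "set zs \<subseteq> Ak (k-1) \<union> {inv t \<otimes> y \<otimes> t | y. y \<in> Ak (k-1)}" "x = foldr (\<otimes>) zs \<one>"
    using decomp[OF k, of x] Suc.prems unfolding k_def by auto
  have Usub: "subgroup (Ak (k-1)) G" using sub k by simp
  obtain ps x' where ps: "okl (Ak (k-1)) ps" "x' \<in> Ak (k-1)" "x = prodl G t ps \<otimes> x'"
    using conv[OF Usub zs(1)] zs(2) by auto
  have UC: "Ak (k-1) \<subseteq> carrier G" using Usub subgroup.subset by blast
  have "g \<otimes> w \<otimes> inv g = prodl G t ps \<otimes> x' \<otimes> t" using Suc.prems ps by simp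
  then show ?case
    using inner[OF k _ refl ps(1) ps(2) Suc.prems(2)] Suc.IH km by auto
qed

lemma main: "k0 \<ge> 0 \<Longrightarrow> x \<in> Ak k0 \<Longrightarrow> g \<in> carrier G \<Longrightarrow> g \<otimes> w \<otimes> inv g = x \<otimes> t \<Longrightarrow> concl"
  using outer[of x "nat k0" g] by simp

end


context hnn begin

sublocale HG: group H by (rule group_H)

lemma foldr_mult: "set zs \<subseteq> carrier H \<Longrightarrow> a \<in> carrier H \<Longrightarrow>
   foldr (\<otimes>\<^bsub>H\<^esub>) zs a = foldr (\<otimes>\<^bsub>H\<^esub>) zs \<one>\<^bsub>H\<^esub> \<otimes>\<^bsub>H\<^esub> a"
proof (induction zs)
  case Nil then show ?case by simp
next
  case (Cons z zs)
  have "foldr (\<otimes>\<^bsub>H\<^esub>) zs \<one>\<^bsub>H\<^esub> \<in> carrier H"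
    using Cons.prems by (induction zs) auto
  then show ?case using Cons by (simp add: HG.m_assoc)
qed

lemma foldr_carrier: "set zs \<subseteq> carrier H \<Longrightarrow> foldr (\<otimes>\<^bsub>H\<^esub>) zs \<one>\<^bsub>H\<^esub> \<in> carrier H"
  by (induction zs) auto

lemma cls_Cons: "[l] \<in> W \<Longrightarrow> x \<in> W \<Longrightarrow> cls (l # x) = cls [l] \<otimes>\<^bsub>H\<^esub> cls x"
  using mult_cls[of "[l]" x] by simp

lemma tt_c[simp]: "tt \<in> carrier H" unfolding hnn_t_def carrier_H by auto
lemma incl_c[simp]: "a \<in> carrier A \<Longrightarrow> incl a \<in> carrier H" unfolding hnn_incl_def carrier_H by auto

lemma cls_False: "cls [Inr False] = inv\<^bsub>H\<^esub> tt"
proof -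
  have "cls [Inr False] \<otimes>\<^bsub>H\<^esub> tt = \<one>\<^bsub>H\<^esub>"
    unfolding hnn_t_def one_H using mult_cls[of "[Inr False]" "[Inr True]"]
      cls_eq[OF eqw_basic0[OF hnn_basic.t_inv2]] by simp
  moreover have "cls [Inr False] \<in> carrier H" unfolding carrier_H by auto
  ultimately show ?thesis using HG.inv_equality tt_c by metis
qed

lemma incl_mult: "a \<in> carrier A \<Longrightarrow> b \<in> carrier A \<Longrightarrow> incl (a \<otimes>\<^bsub>A\<^esub> b) = incl a \<otimes>\<^bsub>H\<^esub> incl b"
  unfolding hnn_incl_def using mult_cls[of "[Inl a]" "[Inl b]"]
    cls_eq[OF eqw_basic0[OF hnn_basic.mult_rel[where a=a and b=b]]] by simp

lemma incl_hom: "incl \<in> hom A H"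
  by (rule homI) (auto simp: incl_mult)

lemma incl_ghom: "group_hom A H incl"
  using incl_hom group_H by (simp add: group_hom_def group_hom_axioms_def A.group_axioms)

lemma hnn_relation: assumes c: "c \<in> carrier C"
  shows "inv\<^bsub>H\<^esub> tt \<otimes>\<^bsub>H\<^esub> incl (iN c) \<otimes>\<^bsub>H\<^esub> tt = incl (iP c)"
proof -
  have Pc: "iP c \<in> carrier A" and Nc: "iN c \<in> carrier A" using c iP iN by (auto simp: hom_def Pi_def)
  have "incl (iN c) = cls [Inr True, Inl (iP c), Inr False]"
    unfolding hnn_incl_def using cls_eq[OF eqw_basic0[OF hnn_basic.hnn_rel[OF c]]] .
  also have "\<dots> = tt \<otimes>\<^bsub>H\<^esub> (incl (iP c) \<otimes>\<^bsub>H\<^esub> inv\<^bsub>H\<^esub> tt)"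
    using Pc cls_Cons[of "Inr True" "[Inl (iP c), Inr False]"] cls_Cons[of "Inl (iP c)" "[Inr False]"]
    by (simp add: hnn_t_def hnn_incl_def cls_False)
  finally show ?thesis using Pc by (simp add: HG.m_assoc)
qed

lemma exp_basic: "hnn_basic A C iP iN l r \<Longrightarrow> sum_list (map letter_exp l) = sum_list (map letter_exp r)"
  by (induction rule: hnn_basic.induct) auto

lemma exp_eqw: "eqw x y \<Longrightarrow> sum_list (map letter_exp x) = sum_list (map letter_exp y)"
  unfolding hnn_eq_def
proof (induction rule: equivclp_induct)
  case base then show ?case by simp
next
  case (step y z) then show ?case using exp_basic by auto
qed

lemma p_cls: "x \<in> W \<Longrightarrow> hnn_p (cls x) = sum_list (map letter_exp x)"
proof -
  assume x: "x \<in> W"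
  have "eqw x (SOME x'. x' \<in> cls x)" using some_cls[OF x] by blast
  then show ?thesis unfolding hnn_p_def using exp_eqw by simp
qed

definition gens :: "nat \<Rightarrow> 'a hnn_word set set" where
  "gens n = {inv\<^bsub>H\<^esub> (tt [^]\<^bsub>H\<^esub> i) \<otimes>\<^bsub>H\<^esub> incl a \<otimes>\<^bsub>H\<^esub> (tt [^]\<^bsub>H\<^esub> i) | a i. a \<in> carrier A \<and> i \<le> n}"

lemma Ak_nat: "hnn_Ak A C iP iN (int n) = generate H (gens n)"
  unfolding hnn_Ak_def gens_def by simp

lemma gens_c: "gens n \<subseteq> carrier H" unfolding gens_def by auto

lemma gens_mono: "n \<le> m \<Longrightarrow> gens n \<subseteq> gens m" unfolding gens_def by (blast intro: order_trans)

lemma Ak_sub: "subgroup (generate H (gens n)) H"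
  by (rule HG.generate_is_subgroup[OF gens_c])

lemma Ak_mono: "n \<le> m \<Longrightarrow> generate H (gens n) \<subseteq> generate H (gens m)"
  by (rule HG.mono_generate[OF gens_mono])

lemma conj_pow: "Z \<in> carrier H \<Longrightarrow>
  inv\<^bsub>H\<^esub> tt \<otimes>\<^bsub>H\<^esub> (inv\<^bsub>H\<^esub> (tt [^]\<^bsub>H\<^esub> i) \<otimes>\<^bsub>H\<^esub> Z \<otimes>\<^bsub>H\<^esub> (tt [^]\<^bsub>H\<^esub> i)) \<otimes>\<^bsub>H\<^esub> tt
   = inv\<^bsub>H\<^esub> (tt [^]\<^bsub>H\<^esub> Suc i) \<otimes>\<^bsub>H\<^esub> Z \<otimes>\<^bsub>H\<^esub> (tt [^]\<^bsub>H\<^esub> Suc i)"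
  by (simp add: HG.inv_mult_group HG.m_assoc)

lemma conj_gens: "h \<in> gens n \<Longrightarrow> inv\<^bsub>H\<^esub> tt \<otimes>\<^bsub>H\<^esub> h \<otimes>\<^bsub>H\<^esub> tt \<in> gens (Suc n)"
proof -
  assume "h \<in> gens n"
  then obtain a i where h: "a \<in> carrier A" "i \<le> n" "h = inv\<^bsub>H\<^esub> (tt [^]\<^bsub>H\<^esub> i) \<otimes>\<^bsub>H\<^esub> incl a \<otimes>\<^bsub>H\<^esub> (tt [^]\<^bsub>H\<^esub> i)"
    unfolding gens_def by blast
  have "inv\<^bsub>H\<^esub> tt \<otimes>\<^bsub>H\<^esub> h \<otimes>\<^bsub>H\<^esub> tt = inv\<^bsub>H\<^esub> (tt [^]\<^bsub>H\<^esub> Suc i) \<otimes>\<^bsub>H\<^esub> incl a \<otimes>\<^bsub>H\<^esub> (tt [^]\<^bsub>H\<^esub> Suc i)"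
    using conj_pow[of "incl a" i] h by simp
  then show ?thesis unfolding gens_def using h by blast
qed

lemma conj_Ak: "y \<in> generate H (gens n) \<Longrightarrow> inv\<^bsub>H\<^esub> tt \<otimes>\<^bsub>H\<^esub> y \<otimes>\<^bsub>H\<^esub> tt \<in> generate H (gens (Suc n))"
proof (induction rule: generate.induct)
  case one
  then show ?case by (simp add: generate.one)
next
  case (incl h)
  then show ?case by (intro generate.incl conj_gens)
next
  case (inv h)
  have hc: "h \<in> carrier H" using inv gens_c by auto
  have "inv\<^bsub>H\<^esub> tt \<otimes>\<^bsub>H\<^esub> inv\<^bsub>H\<^esub> h \<otimes>\<^bsub>H\<^esub> tt = inv\<^bsub>H\<^esub> (inv\<^bsub>H\<^esub> tt \<otimes>\<^bsub>H\<^esub> h \<otimes>\<^bsub>H\<^esub> tt)"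
    using hc by (simp add: HG.inv_mult_group HG.m_assoc)
  then show ?case using generate.inv[OF conj_gens[OF inv]] by simp
next
  case (eng h1 h2)
  have c: "h1 \<in> carrier H" "h2 \<in> carrier H" using eng.hyps HG.generate_in_carrier[OF gens_c] by auto
  have "inv\<^bsub>H\<^esub> tt \<otimes>\<^bsub>H\<^esub> (h1 \<otimes>\<^bsub>H\<^esub> h2) \<otimes>\<^bsub>H\<^esub> tt =
     (inv\<^bsub>H\<^esub> tt \<otimes>\<^bsub>H\<^esub> h1 \<otimes>\<^bsub>H\<^esub> tt) \<otimes>\<^bsub>H\<^esub> (inv\<^bsub>H\<^esub> tt \<otimes>\<^bsub>H\<^esub> h2 \<otimes>\<^bsub>H\<^esub> tt)"
    using c by (simp add: HG.m_assoc)
  then show ?case using generate.eng[OF eng.IH] by simp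
qed

lemma incl_gens0: "a \<in> carrier A \<Longrightarrow> incl a \<in> gens 0"
  unfolding gens_def by (rule CollectI, rule exI[of _ a], rule exI[of _ 0]) simp

definition cjs :: "nat \<Rightarrow> 'a hnn_word set set" where
  "cjs n = {inv\<^bsub>H\<^esub> tt \<otimes>\<^bsub>H\<^esub> y \<otimes>\<^bsub>H\<^esub> tt | y. y \<in> generate H (gens n)}"

lemma cjsI: "y \<in> generate H (gens n) \<Longrightarrow> inv\<^bsub>H\<^esub> tt \<otimes>\<^bsub>H\<^esub> y \<otimes>\<^bsub>H\<^esub> tt \<in> cjs n"
  unfolding cjs_def by blast

lemma gensI: "a \<in> carrier A \<Longrightarrow> i \<le> n \<Longrightarrow> inv\<^bsub>H\<^esub> (tt [^]\<^bsub>H\<^esub> i) \<otimes>\<^bsub>H\<^esub> incl a \<otimes>\<^bsub>H\<^esub> (tt [^]\<^bsub>H\<^esub> i) \<in> gens n"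
  unfolding gens_def by blast

lemma gensE: assumes "h \<in> gens n"
  obtains a i where "a \<in> carrier A" "i \<le> n" "h = inv\<^bsub>H\<^esub> (tt [^]\<^bsub>H\<^esub> i) \<otimes>\<^bsub>H\<^esub> incl a \<otimes>\<^bsub>H\<^esub> (tt [^]\<^bsub>H\<^esub> i)"
  using assms unfolding gens_def by blast

lemma decomp_Ak': "x \<in> generate H (gens (Suc n)) \<Longrightarrow>
  \<exists>zs. set zs \<subseteq> generate H (gens n) \<union> cjs n \<and> x = foldr (\<otimes>\<^bsub>H\<^esub>) zs \<one>\<^bsub>H\<^esub>"
proof (induction rule: generate.induct)
  case one
  show ?case by (rule exI[of _ "[]"]) simp
next
  case (incl h)
  obtain a i where h: "a \<in> carrier A" "i \<le> Suc n" "h = inv\<^bsub>H\<^esub> (tt [^]\<^bsub>H\<^esub> i) \<otimes>\<^bsub>H\<^esub> incl a \<otimes>\<^bsub>H\<^esub> (tt [^]\<^bsub>H\<^esub> i)"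
    using gensE[OF incl] by metis
  have hc: "h \<in> carrier H" using h by simp
  have "h \<in> generate H (gens n) \<union> cjs n"
  proof (cases "i \<le> n")
    case True
    then have "h \<in> gens n" using h gensI by simp
    then show ?thesis by (rule UnI1[OF generate.incl])
  next
    case False
    then have i: "i = Suc n" using h by simp
    have "inv\<^bsub>H\<^esub> (tt [^]\<^bsub>H\<^esub> n) \<otimes>\<^bsub>H\<^esub> incl a \<otimes>\<^bsub>H\<^esub> (tt [^]\<^bsub>H\<^esub> n) \<in> generate H (gens n)"
      by (rule generate.incl, rule gensI[OF h(1) order_refl])
    then have "inv\<^bsub>H\<^esub> tt \<otimes>\<^bsub>H\<^esub> (inv\<^bsub>H\<^esub> (tt [^]\<^bsub>H\<^esub> n) \<otimes>\<^bsub>H\<^esub> incl a \<otimes>\<^bsub>H\<^esub> (tt [^]\<^bsub>H\<^esub> n)) \<otimes>\<^bsub>H\<^esub> tt \<in> cjs n"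
      by (rule cjsI)
    moreover have "h = inv\<^bsub>H\<^esub> tt \<otimes>\<^bsub>H\<^esub> (inv\<^bsub>H\<^esub> (tt [^]\<^bsub>H\<^esub> n) \<otimes>\<^bsub>H\<^esub> incl a \<otimes>\<^bsub>H\<^esub> (tt [^]\<^bsub>H\<^esub> n)) \<otimes>\<^bsub>H\<^esub> tt"
      using conj_pow[of "incl a" n] h i by simp
    ultimately show ?thesis by simp
  qed
  then show ?case using hc by (intro exI[of _ "[h]"]) simp
next
  case (inv h)
  obtain a i where h: "a \<in> carrier A" "i \<le> Suc n" "h = inv\<^bsub>H\<^esub> (tt [^]\<^bsub>H\<^esub> i) \<otimes>\<^bsub>H\<^esub> incl a \<otimes>\<^bsub>H\<^esub> (tt [^]\<^bsub>H\<^esub> i)"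
    using gensE[OF inv] by metis
  have hc: "h \<in> carrier H" using h by simp
  have "inv\<^bsub>H\<^esub> h \<in> generate H (gens n) \<union> cjs n"
  proof (cases "i \<le> n")
    case True
    then have "h \<in> gens n" using h gensI by simp
    then show ?thesis by (rule UnI1[OF generate.inv])
  next
    case False
    then have i: "i = Suc n" using h by simp
    define y where "y = inv\<^bsub>H\<^esub> (tt [^]\<^bsub>H\<^esub> n) \<otimes>\<^bsub>H\<^esub> incl a \<otimes>\<^bsub>H\<^esub> (tt [^]\<^bsub>H\<^esub> n)"
    have yg: "y \<in> gens n" unfolding y_def by (rule gensI[OF h(1) order_refl])
    have yc: "y \<in> carrier H" unfolding y_def using h by simp
    have "inv\<^bsub>H\<^esub> y \<in> generate H (gens n)" using yg by (rule generate.inv)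
    then have "inv\<^bsub>H\<^esub> tt \<otimes>\<^bsub>H\<^esub> inv\<^bsub>H\<^esub> y \<otimes>\<^bsub>H\<^esub> tt \<in> cjs n" by (rule cjsI)
    moreover have "h = inv\<^bsub>H\<^esub> tt \<otimes>\<^bsub>H\<^esub> y \<otimes>\<^bsub>H\<^esub> tt"
      using conj_pow[of "incl a" n] h i unfolding y_def by simp
    then have "inv\<^bsub>H\<^esub> h = inv\<^bsub>H\<^esub> tt \<otimes>\<^bsub>H\<^esub> inv\<^bsub>H\<^esub> y \<otimes>\<^bsub>H\<^esub> tt"
      using yc by (simp add: HG.inv_mult_group HG.m_assoc)
    ultimately show ?thesis by simp
  qed
  then show ?case using hc by (intro exI[of _ "[inv\<^bsub>H\<^esub> h]"]) simp
next
  case (eng h1 h2)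
  obtain zs1 where z1: "set zs1 \<subseteq> generate H (gens n) \<union> cjs n" "h1 = foldr (\<otimes>\<^bsub>H\<^esub>) zs1 \<one>\<^bsub>H\<^esub>"
    using eng.IH(1) by blast
  obtain zs2 where z2: "set zs2 \<subseteq> generate H (gens n) \<union> cjs n" "h2 = foldr (\<otimes>\<^bsub>H\<^esub>) zs2 \<one>\<^bsub>H\<^esub>"
    using eng.IH(2) by blast
  have GC: "generate H (gens n) \<subseteq> carrier H" using HG.generate_incl[OF gens_c] .
  have CC: "cjs n \<subseteq> carrier H" unfolding cjs_def using GC by auto
  have C1: "set zs1 \<subseteq> carrier H" "set zs2 \<subseteq> carrier H" using z1(1) z2(1) GC CC by auto
  have "foldr (\<otimes>\<^bsub>H\<^esub>) (zs1 @ zs2) \<one>\<^bsub>H\<^esub> = h1 \<otimes>\<^bsub>H\<^esub> h2"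
    using foldr_mult[OF C1(1) foldr_carrier[OF C1(2)]] z1 z2 by simp
  moreover have "set (zs1 @ zs2) \<subseteq> generate H (gens n) \<union> cjs n" using z1 z2 by simp
  ultimately show ?case by blast
qed

end


context hnn begin

lemma word_decomp: "x \<in> W \<Longrightarrow> \<exists>j::nat. \<exists>n::nat. \<exists>y \<in> generate H (gens n).
   cls x = tt [^]\<^bsub>H\<^esub> j \<otimes>\<^bsub>H\<^esub> y \<otimes>\<^bsub>H\<^esub> inv\<^bsub>H\<^esub> (tt [^]\<^bsub>H\<^esub> j) \<otimes>\<^bsub>H\<^esub> tt [^]\<^bsub>H\<^esub> (sum_list (map letter_exp x))"
proof (induction x)
  case Nil
  have "cls [] = tt [^]\<^bsub>H\<^esub> (0::nat) \<otimes>\<^bsub>H\<^esub> \<one>\<^bsub>H\<^esub> \<otimes>\<^bsub>H\<^esub> inv\<^bsub>H\<^esub> (tt [^]\<^bsub>H\<^esub> (0::nat)) \<otimes>\<^bsub>H\<^esub> tt [^]\<^bsub>H\<^esub> (sum_list (map letter_exp ([]::'a hnn_word)))"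
    by (simp flip: one_H)
  then show ?case using generate.one by blast
next
  case (Cons l x)
  have lW: "[l] \<in> W" and xW: "x \<in> W" using Cons.prems by (auto simp: hnn_words_def)
  obtain j :: nat and n y where y: "y \<in> generate H (gens n)"
    and eq: "cls x = tt [^]\<^bsub>H\<^esub> j \<otimes>\<^bsub>H\<^esub> y \<otimes>\<^bsub>H\<^esub> inv\<^bsub>H\<^esub> (tt [^]\<^bsub>H\<^esub> j) \<otimes>\<^bsub>H\<^esub> tt [^]\<^bsub>H\<^esub> (sum_list (map letter_exp x))"
    using Cons.IH[OF xW] by blast
  define e where "e = sum_list (map letter_exp x)"
  define T where "T = tt [^]\<^bsub>H\<^esub> j"
  define E where "E = tt [^]\<^bsub>H\<^esub> e"
  have GC: "\<And>m. generate H (gens m) \<subseteq> carrier H" using HG.generate_incl[OF gens_c] .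
  have yc: "y \<in> carrier H" using y GC by auto
  have Tc: "T \<in> carrier H" and Ec: "E \<in> carrier H" unfolding T_def E_def by auto
  have cl: "cls (l # x) = cls [l] \<otimes>\<^bsub>H\<^esub> (T \<otimes>\<^bsub>H\<^esub> y \<otimes>\<^bsub>H\<^esub> inv\<^bsub>H\<^esub> T \<otimes>\<^bsub>H\<^esub> E)"
    using cls_Cons[OF lW xW] eq unfolding T_def E_def e_def by simp
  show ?case
  proof (cases l)
    case (Inl a)
    have a: "a \<in> carrier A" using lW Inl by simp
    define g0 where "g0 = inv\<^bsub>H\<^esub> T \<otimes>\<^bsub>H\<^esub> incl a \<otimes>\<^bsub>H\<^esub> T"
    have g0: "g0 \<in> generate H (gens j)" unfolding g0_def T_def by (rule generate.incl, rule gensI[OF a order_refl])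
    have g0c: "g0 \<in> carrier H" unfolding g0_def using Tc a by simp
    have g0': "g0 \<in> generate H (gens (max n j))" using g0 Ak_mono[of j "max n j"] by auto
    have y1: "y \<in> generate H (gens (max n j))" using y Ak_mono[of n "max n j"] by auto
    have y': "g0 \<otimes>\<^bsub>H\<^esub> y \<in> generate H (gens (max n j))" using generate.eng[OF g0' y1] .
    have "cls (l # x) = T \<otimes>\<^bsub>H\<^esub> (g0 \<otimes>\<^bsub>H\<^esub> y) \<otimes>\<^bsub>H\<^esub> inv\<^bsub>H\<^esub> T \<otimes>\<^bsub>H\<^esub> E"
      using cl Inl a Tc yc Ec unfolding g0_def by (simp add: hnn_incl_def[symmetric] HG.m_assoc)
    moreover have "sum_list (map letter_exp (l # x)) = e" using Inl unfolding e_def by simp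
    ultimately have "cls (l # x) = tt [^]\<^bsub>H\<^esub> j \<otimes>\<^bsub>H\<^esub> (g0 \<otimes>\<^bsub>H\<^esub> y) \<otimes>\<^bsub>H\<^esub> inv\<^bsub>H\<^esub> (tt [^]\<^bsub>H\<^esub> j) \<otimes>\<^bsub>H\<^esub> tt [^]\<^bsub>H\<^esub> (sum_list (map letter_exp (l # x)))"
      unfolding T_def E_def by simp
    then show ?thesis using y' by blast
  next
    case (Inr b)
    show ?thesis
    proof (cases b)
      case True
      have "cls (l # x) = tt \<otimes>\<^bsub>H\<^esub> T \<otimes>\<^bsub>H\<^esub> y \<otimes>\<^bsub>H\<^esub> inv\<^bsub>H\<^esub> (tt \<otimes>\<^bsub>H\<^esub> T) \<otimes>\<^bsub>H\<^esub> (tt \<otimes>\<^bsub>H\<^esub> E)"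
        using cl Inr True Tc yc Ec by (simp add: hnn_t_def[symmetric] HG.m_assoc HG.inv_mult_group)
      moreover have "tt \<otimes>\<^bsub>H\<^esub> T = tt [^]\<^bsub>H\<^esub> Suc j" unfolding T_def by (metis HG.nat_pow_Suc2 tt_c)
      moreover have "tt \<otimes>\<^bsub>H\<^esub> E = tt [^]\<^bsub>H\<^esub> (1 + e)" unfolding E_def by (simp add: HG.int_pow_mult)
      moreover have "sum_list (map letter_exp (l # x)) = 1 + e" using Inr True unfolding e_def by simp
      ultimately have "cls (l # x) = tt [^]\<^bsub>H\<^esub> Suc j \<otimes>\<^bsub>H\<^esub> y \<otimes>\<^bsub>H\<^esub> inv\<^bsub>H\<^esub> (tt [^]\<^bsub>H\<^esub> Suc j) \<otimes>\<^bsub>H\<^esub> tt [^]\<^bsub>H\<^esub> (sum_list (map letter_exp (l # x)))"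
        by simp
      then show ?thesis using y by blast
    next
      case False
      have cF: "cls [l] = inv\<^bsub>H\<^esub> tt" using Inr False cls_False by simp
      have iE: "inv\<^bsub>H\<^esub> tt \<otimes>\<^bsub>H\<^esub> E = tt [^]\<^bsub>H\<^esub> (-1 + e)"
      proof -
        have "tt [^]\<^bsub>H\<^esub> (-1 + e) = tt [^]\<^bsub>H\<^esub> (-1::int) \<otimes>\<^bsub>H\<^esub> tt [^]\<^bsub>H\<^esub> e"
          by (rule HG.int_pow_mult) simp
        moreover have "tt [^]\<^bsub>H\<^esub> (-1::int) = inv\<^bsub>H\<^esub> tt" using HG.int_pow_neg[of tt 1] by simp
        ultimately show ?thesis unfolding E_def by simp
      qed
      have ex: "sum_list (map letter_exp (l # x)) = -1 + e" using Inr False unfolding e_def by simp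
      show ?thesis
      proof (cases j)
        case 0
        have y': "inv\<^bsub>H\<^esub> tt \<otimes>\<^bsub>H\<^esub> y \<otimes>\<^bsub>H\<^esub> tt \<in> generate H (gens (Suc n))" using conj_Ak[OF y] .
        have "cls (l # x) = tt [^]\<^bsub>H\<^esub> (0::nat) \<otimes>\<^bsub>H\<^esub> (inv\<^bsub>H\<^esub> tt \<otimes>\<^bsub>H\<^esub> y \<otimes>\<^bsub>H\<^esub> tt) \<otimes>\<^bsub>H\<^esub> inv\<^bsub>H\<^esub> (tt [^]\<^bsub>H\<^esub> (0::nat)) \<otimes>\<^bsub>H\<^esub> (inv\<^bsub>H\<^esub> tt \<otimes>\<^bsub>H\<^esub> E)"
          using cl cF 0 Tc yc Ec unfolding T_def by (simp add: HG.m_assoc)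
        then have "cls (l # x) = tt [^]\<^bsub>H\<^esub> (0::nat) \<otimes>\<^bsub>H\<^esub> (inv\<^bsub>H\<^esub> tt \<otimes>\<^bsub>H\<^esub> y \<otimes>\<^bsub>H\<^esub> tt) \<otimes>\<^bsub>H\<^esub> inv\<^bsub>H\<^esub> (tt [^]\<^bsub>H\<^esub> (0::nat)) \<otimes>\<^bsub>H\<^esub> tt [^]\<^bsub>H\<^esub> (sum_list (map letter_exp (l # x)))"
          unfolding ex iE .
        then show ?thesis using y' by blast
      next
        case (Suc j')
        define T' where "T' = tt [^]\<^bsub>H\<^esub> j'"
        have T'c: "T' \<in> carrier H" unfolding T'_def by simp
        have TT: "T = tt \<otimes>\<^bsub>H\<^esub> T'" unfolding T_def T'_def Suc by (metis HG.nat_pow_Suc2 tt_c)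
        have "cls (l # x) = T' \<otimes>\<^bsub>H\<^esub> y \<otimes>\<^bsub>H\<^esub> inv\<^bsub>H\<^esub> T' \<otimes>\<^bsub>H\<^esub> (inv\<^bsub>H\<^esub> tt \<otimes>\<^bsub>H\<^esub> E)"
          using cl cF TT T'c yc Ec by (simp add: HG.m_assoc HG.inv_mult_group)
        then have "cls (l # x) = tt [^]\<^bsub>H\<^esub> j' \<otimes>\<^bsub>H\<^esub> y \<otimes>\<^bsub>H\<^esub> inv\<^bsub>H\<^esub> (tt [^]\<^bsub>H\<^esub> j') \<otimes>\<^bsub>H\<^esub> tt [^]\<^bsub>H\<^esub> (sum_list (map letter_exp (l # x)))"
          unfolding ex iE T'_def .
        then show ?thesis using y by blast
      qed
    qed
  qed
qed

end

theorem lemma6p2: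
  fixes A :: "('a, 'm) monoid_scheme" and C :: "('c, 'n) monoid_scheme"
    and iP iN :: "'c \<Rightarrow> 'a" and w :: "'a hnn_word set"
  assumes "group A" and "group C"
    and "iP \<in> hom C A" and "inj_on iP (carrier C)"
    and "iN \<in> hom C A" and "inj_on iN (carrier C)"
    and "w \<in> carrier (HNN A C iP iN)"
    and "hnn_p w = 1"
  shows "(\<exists>a \<in> carrier A. \<exists>g \<in> carrier (HNN A C iP iN).
            g \<otimes>\<^bsub>HNN A C iP iN\<^esub> w \<otimes>\<^bsub>HNN A C iP iN\<^esub> inv\<^bsub>HNN A C iP iN\<^esub> g
            = hnn_incl A C iP iN a \<otimes>\<^bsub>HNN A C iP iN\<^esub> hnn_t A C iP iN)
       \<or> (\<exists>k::int. k > 0 \<and> (\<exists>m::nat. m \<ge> 1 \<and> (\<exists>a b x g.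
            (\<forall>i\<in>{1..m}.
               a i \<in> hnn_Ak A C iP iN (k - 1)
                 - {inv\<^bsub>HNN A C iP iN\<^esub> hnn_t A C iP iN \<otimes>\<^bsub>HNN A C iP iN\<^esub> y
                      \<otimes>\<^bsub>HNN A C iP iN\<^esub> hnn_t A C iP iN | y. y \<in> hnn_Ak A C iP iN (k - 2)}
             \<and> b i \<in> hnn_Ak A C iP iN (k - 1) - hnn_Ak A C iP iN (k - 2))
            \<and> x \<in> hnn_Ak A C iP iN (k - 1)
            \<and> g \<in> carrier (HNN A C iP iN)
            \<and> g \<otimes>\<^bsub>HNN A C iP iN\<^esub> w \<otimes>\<^bsub>HNN A C iP iN\<^esub> inv\<^bsub>HNN A C iP iN\<^esub> g
              = alt_prod (HNN A C iP iN) (hnn_t A C iP iN) a b m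
                  \<otimes>\<^bsub>HNN A C iP iN\<^esub> x \<otimes>\<^bsub>HNN A C iP iN\<^esub> hnn_t A C iP iN)))"
proof -
  interpret hnn A C iP iN
    using assms by (simp add: hnn_def hnn_axioms_def)
  obtain x where xW: "x \<in> W" and wx: "w = cls x" using assms(7) by (auto simp: carrier_H)
  have e1: "sum_list (map letter_exp x) = 1" using assms(8) p_cls[OF xW] wx by simp
  obtain j :: nat and n y where y: "y \<in> generate H (gens n)"
    and eq0: "cls x = tt [^]\<^bsub>H\<^esub> j \<otimes>\<^bsub>H\<^esub> y \<otimes>\<^bsub>H\<^esub> inv\<^bsub>H\<^esub> (tt [^]\<^bsub>H\<^esub> j) \<otimes>\<^bsub>H\<^esub> tt [^]\<^bsub>H\<^esub> (sum_list (map letter_exp x))"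
    using word_decomp[OF xW] by blast
  have eq: "w = tt [^]\<^bsub>H\<^esub> j \<otimes>\<^bsub>H\<^esub> y \<otimes>\<^bsub>H\<^esub> inv\<^bsub>H\<^esub> (tt [^]\<^bsub>H\<^esub> j) \<otimes>\<^bsub>H\<^esub> tt"
    using eq0 e1 wx by simp
  define T where "T = tt [^]\<^bsub>H\<^esub> j"
  have Tc: "T \<in> carrier H" unfolding T_def by simp
  have GC: "\<And>m. generate H (gens m) \<subseteq> carrier H" using HG.generate_incl[OF gens_c] .
  have yc: "y \<in> carrier H" using y GC by auto
  have comm: "T \<otimes>\<^bsub>H\<^esub> tt = tt \<otimes>\<^bsub>H\<^esub> T" unfolding T_def by (metis HG.nat_pow_Suc2 HG.nat_pow_Suc tt_c)
  have wc: "w \<in> carrier H" by (rule assms(7))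
  have conjw: "inv\<^bsub>H\<^esub> T \<otimes>\<^bsub>H\<^esub> w \<otimes>\<^bsub>H\<^esub> inv\<^bsub>H\<^esub> (inv\<^bsub>H\<^esub> T) = y \<otimes>\<^bsub>H\<^esub> tt"
  proof -
    have "inv\<^bsub>H\<^esub> T \<otimes>\<^bsub>H\<^esub> w \<otimes>\<^bsub>H\<^esub> inv\<^bsub>H\<^esub> (inv\<^bsub>H\<^esub> T) = y \<otimes>\<^bsub>H\<^esub> (inv\<^bsub>H\<^esub> T \<otimes>\<^bsub>H\<^esub> (tt \<otimes>\<^bsub>H\<^esub> T))"
      unfolding eq T_def[symmetric] using Tc yc by (simp add: HG.m_assoc)
    also have "inv\<^bsub>H\<^esub> T \<otimes>\<^bsub>H\<^esub> (tt \<otimes>\<^bsub>H\<^esub> T) = tt" unfolding comm[symmetric] using Tc by simp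
    finally show ?thesis .
  qed
  have Ak0: "hnn_Ak A C iP iN 0 = generate H (gens 0)" using Ak_nat[of 0] by simp
  have Akm1: "hnn_Ak A C iP iN (-1) = incl ` iN ` carrier C" unfolding hnn_Ak_def by simp
  have Akk: "hnn_Ak A C iP iN k = generate H (gens (nat k))" if "0 \<le> k" for k
    using Ak_nat[of "nat k"] that by simp
  have iNc: "c \<in> carrier C \<Longrightarrow> iN c \<in> carrier A" for c using iN by (auto simp: hom_def Pi_def)
  have iPc: "c \<in> carrier C \<Longrightarrow> iP c \<in> carrier A" for c using iP by (auto simp: hom_def Pi_def)
  interpret ab: absHNN H tt w "hnn_Ak A C iP iN"
  proof (intro absHNN.intro group_H absHNN_axioms.intro)
    show "tt \<in> carrier H" by simp
  next
    show "w \<in> carrier H" by (rule wc)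
  next
    fix k :: int assume "0 \<le> k"
    then show "subgroup (hnn_Ak A C iP iN k) H" using Akk Ak_sub by simp
  next
    fix k :: int assume k: "1 \<le> k"
    show "{inv\<^bsub>H\<^esub> tt \<otimes>\<^bsub>H\<^esub> y \<otimes>\<^bsub>H\<^esub> tt |y. y \<in> hnn_Ak A C iP iN (k - 2)} \<subseteq> hnn_Ak A C iP iN (k - 1)"
    proof (cases "k = 1")
      case True
      show ?thesis
      proof
        fix z assume "z \<in> {inv\<^bsub>H\<^esub> tt \<otimes>\<^bsub>H\<^esub> y \<otimes>\<^bsub>H\<^esub> tt |y. y \<in> hnn_Ak A C iP iN (k - 2)}"
        then obtain c where c: "c \<in> carrier C" "z = inv\<^bsub>H\<^esub> tt \<otimes>\<^bsub>H\<^esub> incl (iN c) \<otimes>\<^bsub>H\<^esub> tt"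
          using True Akm1 by auto
        then have "z = incl (iP c)" using hnn_relation by simp
        then have "z \<in> gens 0" using incl_gens0 iPc c by simp
        then show "z \<in> hnn_Ak A C iP iN (k - 1)" using True Ak0 generate.incl by simp
      qed
    next
      case False
      define m where "m = nat (k - 2)"
      have e1: "hnn_Ak A C iP iN (k - 2) = generate H (gens m)" using Akk[of "k-2"] False k unfolding m_def by simp
      have e2: "hnn_Ak A C iP iN (k - 1) = generate H (gens (Suc m))"
      proof -
        have "nat (k - 1) = Suc m" using False k unfolding m_def by simp
        then show ?thesis using Akk[of "k-1"] k by simp
      qed
      show ?thesis unfolding e1 e2 using conj_Ak by blast
    qed
  next
    fix k :: int assume k: "1 \<le> k"
    show "hnn_Ak A C iP iN (k - 2) \<subseteq> hnn_Ak A C iP iN (k - 1)"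
    proof (cases "k = 1")
      case True
      show ?thesis
      proof
        fix z assume "z \<in> hnn_Ak A C iP iN (k - 2)"
        then obtain c where c: "c \<in> carrier C" "z = incl (iN c)" using True Akm1 by auto
        then have "z \<in> gens 0" using incl_gens0 iNc by simp
        then show "z \<in> hnn_Ak A C iP iN (k - 1)" using True Ak0 generate.incl by simp
      qed
    next
      case False
      define m where "m = nat (k - 2)"
      have e1: "hnn_Ak A C iP iN (k - 2) = generate H (gens m)" using Akk[of "k-2"] False k unfolding m_def by simp
      have e2: "hnn_Ak A C iP iN (k - 1) = generate H (gens (Suc m))"
      proof -
        have "nat (k - 1) = Suc m" using False k unfolding m_def by simp
        then show ?thesis using Akk[of "k-1"] k by simp
      qed
      show ?thesis unfolding e1 e2 by (rule Ak_mono) simp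
    qed
  next
    fix k :: int and z assume k: "1 \<le> k" and z: "z \<in> hnn_Ak A C iP iN k"
    define m where "m = nat (k - 1)"
    have e1: "hnn_Ak A C iP iN (k - 1) = generate H (gens m)" using Akk[of "k-1"] k unfolding m_def by simp
    have e2: "hnn_Ak A C iP iN k = generate H (gens (Suc m))"
    proof -
      have "nat k = Suc m" using k unfolding m_def by simp
      then show ?thesis using Akk[of k] k by simp
    qed
    have "z \<in> generate H (gens (Suc m))" using z e2 by simp
    from decomp_Ak'[OF this] obtain zs where
      "set zs \<subseteq> generate H (gens m) \<union> cjs m" "z = foldr (\<otimes>\<^bsub>H\<^esub>) zs \<one>\<^bsub>H\<^esub>" by blast
    then show "\<exists>zs. set zs \<subseteq> hnn_Ak A C iP iN (k - 1) \<union> {inv\<^bsub>H\<^esub> tt \<otimes>\<^bsub>H\<^esub> y \<otimes>\<^bsub>H\<^esub> tt |y. y \<in> hnn_Ak A C iP iN (k - 1)}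
       \<and> z = foldr (\<otimes>\<^bsub>H\<^esub>) zs \<one>\<^bsub>H\<^esub>"
      unfolding cjs_def e1 by blast
  qed
  have yA: "y \<in> hnn_Ak A C iP iN (int n)" using y Ak_nat by simp
  have gc: "inv\<^bsub>H\<^esub> T \<in> carrier H" using Tc by simp
  have "ab.concl" using ab.main[of "int n" y "inv\<^bsub>H\<^esub> T"] yA gc conjw by simp
  then show ?thesis unfolding ab.concl_def
  proof (elim disjE)
    assume "\<exists>x\<in>hnn_Ak A C iP iN 0. \<exists>g\<in>carrier H. g \<otimes>\<^bsub>H\<^esub> w \<otimes>\<^bsub>H\<^esub> inv\<^bsub>H\<^esub> g = x \<otimes>\<^bsub>H\<^esub> tt"
    then obtain z g where z: "z \<in> generate H (gens 0)" and g: "g \<in> carrier H" "g \<otimes>\<^bsub>H\<^esub> w \<otimes>\<^bsub>H\<^esub> inv\<^bsub>H\<^esub> g = z \<otimes>\<^bsub>H\<^esub> tt"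
      using Ak0 by auto
    have "gens 0 \<subseteq> incl ` carrier A" unfolding gens_def by auto
    then have "generate H (gens 0) \<subseteq> incl ` carrier A"
      by (rule HG.generate_subgroup_incl[OF _ group_hom.img_is_subgroup[OF incl_ghom]])
    then obtain a where "a \<in> carrier A" "z = incl a" using z by auto
    then show ?thesis using g by blast
  next
    assume "\<exists>k>0. \<exists>m\<ge>1. \<exists>a b x g. (\<forall>i\<in>{1..m}. a i \<in> hnn_Ak A C iP iN (k - 1) - {inv\<^bsub>H\<^esub> tt \<otimes>\<^bsub>H\<^esub> y \<otimes>\<^bsub>H\<^esub> tt |y. y \<in> hnn_Ak A C iP iN (k - 2)} \<and>
      b i \<in> hnn_Ak A C iP iN (k - 1) - hnn_Ak A C iP iN (k - 2)) \<and> x \<in> hnn_Ak A C iP iN (k - 1) \<and>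
      g \<in> carrier H \<and> g \<otimes>\<^bsub>H\<^esub> w \<otimes>\<^bsub>H\<^esub> inv\<^bsub>H\<^esub> g = alt_prod H tt a b m \<otimes>\<^bsub>H\<^esub> x \<otimes>\<^bsub>H\<^esub> tt"
    then show ?thesis by (rule disjI2)
  qed
qed


end
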